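(* Let $d\ge 3$ and $h\ge 1$ be integers, and let $G(d,h)$ be the sandpile group of the $d$-valent tree of depth $h$. Then the rank of $G(d,h)$ (the minimal number of generators of this finite abelian group) is $(d-1)^h$.
   Context: Let $\mathcal{T}(d,h)$ be the ball of radius $h$ about a fixed vertex $0$ (the root) in the infinite $d$-regular tree, i.e. the rooted tree in which the root has $d$ children, every vertex at distance $1,\dots,h-1$ from the root has $d-1$ children, and the vertices at distance $h$ (the leaves) have no children. Let $V$ be its vertex set and $A$ its adjacency matrix. Let $\Delta := dI - A$, let $\delta_i\in\mathbb{Z}^V$ ($i\in V$) be the rows of $\Delta$, and let $\Lambda\subset\mathbb{Z}^V$ be the lattice they span. The sandpile group is $G(d,h) := \mathbb{Z}^V/\Lambda$ (a finite abelian group). *)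

theory Defs
  imports Main
begin

text \<open>Vertices of T(d,h): the root is the empty list; a vertex at distance k is the
list of child indices along the path from the root; the root has d children
(indices < d), every other non-leaf vertex has d-1 children (indices < d-1).\<close>

definition tree_verts :: "nat \<Rightarrow> nat \<Rightarrow> nat list set" where
  "tree_verts d h = {xs. length xs \<le> h \<and>
     (\<forall>k<length xs. xs ! k < (if k = 0 then d else d - 1))}"

definition tree_adj :: "nat list \<Rightarrow> nat list \<Rightarrow> bool" where
  "tree_adj u v \<longleftrightarrow> (\<exists>i. v = u @ [i]) \<or> (\<exists>i. u = v @ [i])"

definition tree_Delta :: "nat \<Rightarrow> nat list \<Rightarrow> nat list \<Rightarrow> int" where
  "tree_Delta d u v = (if u = v then int d else 0) - (if tree_adj u v then 1 else 0)"

definition ZV :: "nat \<Rightarrow> nat \<Rightarrow> (nat list \<Rightarrow> int) set" where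
  "ZV d h = {x. \<forall>j. j \<notin> tree_verts d h \<longrightarrow> x j = 0}"

definition sandpile_lattice :: "nat \<Rightarrow> nat \<Rightarrow> (nat list \<Rightarrow> int) set" where
  "sandpile_lattice d h = {f. \<exists>a :: nat list \<Rightarrow> int. \<forall>j.
     f j = (if j \<in> tree_verts d h then (\<Sum>i\<in>tree_verts d h. a i * tree_Delta d i j) else 0)}"

definition sandpile_rank :: "nat \<Rightarrow> nat \<Rightarrow> nat" where
  "sandpile_rank d h = (LEAST k. \<exists>g :: nat \<Rightarrow> nat list \<Rightarrow> int.
     (\<forall>i<k. g i \<in> ZV d h) \<and>
     (\<forall>x \<in> ZV d h. \<exists>c :: nat \<Rightarrow> int.
        (\<lambda>j. x j - (\<Sum>i<k. c i * g i j)) \<in> sandpile_lattice d h))"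

end

theory Submission
  imports Defs "HOL-Library.FuncSet"
begin
definition nb :: "nat \<Rightarrow> nat \<Rightarrow> nat" where
  "nb d k = (if k = 0 then d else d - 1)"
lemma tv_alt: "tree_verts d h = {xs. length xs \<le> h \<and> (\<forall>k<length xs. xs ! k < nb d k)}"
  unfolding tree_verts_def nb_def by simp
lemma tv_snoc: "xs @ [i] \<in> tree_verts d h \<longleftrightarrow>
   xs \<in> tree_verts d h \<and> length xs < h \<and> i < nb d (length xs)"
proof -
  have q: "(\<forall>k<Suc n. P k) \<longleftrightarrow> (\<forall>k<n. P k) \<and> P n" for P and n :: nat
    by (auto simp: less_Suc_eq)
  have r: "(\<forall>k<length xs. (xs @ [i]) ! k < nb d k) \<longleftrightarrow> (\<forall>k<length xs. xs ! k < nb d k)"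
    by (simp add: nth_append)
  have "xs @ [i] \<in> tree_verts d h \<longleftrightarrow> Suc (length xs) \<le> h \<and> (\<forall>k<Suc (length xs). (xs @ [i]) ! k < nb d k)"
    unfolding tv_alt by simp
  also have "\<dots> \<longleftrightarrow> Suc (length xs) \<le> h \<and> (\<forall>k<length xs. xs ! k < nb d k) \<and> i < nb d (length xs)"
    by (simp only: q r nth_append_length)
  finally show ?thesis unfolding tv_alt by auto
qed
lemma tv_butlast: "xs \<in> tree_verts d h \<Longrightarrow> butlast xs \<in> tree_verts d h"
  by (cases xs rule: rev_cases) (auto simp: tv_snoc)

lemma tv_snoc_last: "xs \<in> tree_verts d h \<Longrightarrow> xs \<noteq> [] \<Longrightarrow>
   butlast xs \<in> tree_verts d h \<and> length xs - 1 < h \<and> last xs < nb d (length xs - 1)"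
  by (cases xs rule: rev_cases) (auto simp: tv_snoc)

lemma tv_finite: "finite (tree_verts d h)"
proof -
  have "tree_verts d h \<subseteq> {xs. set xs \<subseteq> {..<d} \<and> length xs \<le> h}"
  proof
    fix xs assume "xs \<in> tree_verts d h"
    then have a: "length xs \<le> h" and b: "\<forall>k<length xs. xs!k < nb d k" by (auto simp: tv_alt)
    have c: "nb d k \<le> d" for k by (simp add: nb_def)
    have "set xs \<subseteq> {..<d}"
    proof
      fix x assume "x \<in> set xs"
      then obtain k where "k < length xs" "x = xs ! k" by (metis in_set_conv_nth)
      with b c[of k] show "x \<in> {..<d}" by force
    qed
    with a show "xs \<in> {xs. set xs \<subseteq> {..<d} \<and> length xs \<le> h}" by simp
  qed
  moreover have "finite {xs. set xs \<subseteq> {..<d} \<and> length xs \<le> h}"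
    by (rule finite_lists_length_le) simp
  ultimately show ?thesis by (rule finite_subset)
qed
lemma nbr_set: assumes "u \<in> tree_verts d h"
  shows "{j \<in> tree_verts d h. tree_adj u j} =
    (if u = [] then {} else {butlast u}) \<union>
    (if length u < h then (\<lambda>i. u @ [i]) ` {..<nb d (length u)} else {})" (is "?L = ?R")
proof (intro set_eqI iffI)
  fix j assume j: "j \<in> ?L"
  then have jv: "j \<in> tree_verts d h" and a: "(\<exists>i. j = u @ [i]) \<or> (\<exists>i. u = j @ [i])"
    by (auto simp: tree_adj_def)
  from a show "j \<in> ?R"
  proof
    assume "\<exists>i. j = u @ [i]"
    then obtain i where ji: "j = u @ [i]" by blast
    with jv have "length u < h" "i < nb d (length u)" by (simp_all add: tv_snoc)
    then have "j \<in> (\<lambda>i. u @ [i]) ` {..<nb d (length u)}" using ji by blast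
    then show ?thesis using \<open>length u < h\<close> by simp
  next
    assume "\<exists>i. u = j @ [i]"
    then obtain i where "u = j @ [i]" by blast
    then have "u \<noteq> []" "j = butlast u" by simp_all
    then show ?thesis by simp
  qed
next
  fix j assume jr: "j \<in> ?R"
  have "(u \<noteq> [] \<and> j = butlast u) \<or> (length u < h \<and> (\<exists>i<nb d (length u). j = u @ [i]))"
  proof (cases "u = []")
    case True
    then show ?thesis using jr by (cases "length u < h") auto
  next
    case False
    then show ?thesis using jr by (cases "length u < h") auto
  qed
  then show "j \<in> ?L"
  proof
    assume a: "u \<noteq> [] \<and> j = butlast u"
    then have "u = j @ [last u]" by simp
    then have "tree_adj u j" unfolding tree_adj_def by blast
    moreover have "j \<in> tree_verts d h" using a tv_butlast[OF assms] by simp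
    ultimately show ?thesis by simp
  next
    assume "length u < h \<and> (\<exists>i<nb d (length u). j = u @ [i])"
    then obtain i where "length u < h" "i < nb d (length u)" "j = u @ [i]" by blast
    then show ?thesis using assms by (simp add: tv_snoc tree_adj_def)
  qed
qed


lemma delta_sum: assumes u: "u \<in> tree_verts d h"
  shows "(\<Sum>j\<in>tree_verts d h. tree_Delta d u j * F j) = int d * F u -
     ((if u = [] then 0 else F (butlast u)) +
      (if length u < h then (\<Sum>i<nb d (length u). F (u @ [i])) else 0))"
proof -
  let ?V = "tree_verts d h"
  have fin: "finite ?V" by (rule tv_finite)
  have "(\<Sum>j\<in>?V. tree_Delta d u j * F j) =
      (\<Sum>j\<in>?V. (if u = j then int d * F j else 0)) - (\<Sum>j\<in>?V. (if tree_adj u j then F j else 0))"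
    unfolding tree_Delta_def by (simp add: sum_subtractf[symmetric] left_diff_distrib, rule sum.cong, auto)
  also have "(\<Sum>j\<in>?V. (if u = j then int d * F j else 0)) = int d * F u"
    using u fin by (simp add: sum.delta)
  also have "(\<Sum>j\<in>?V. (if tree_adj u j then F j else 0)) = sum F {j\<in>?V. tree_adj u j}"
    using fin by (simp add: sum.inter_filter)
  also have "\<dots> = sum F ((if u = [] then {} else {butlast u}) \<union>
    (if length u < h then (\<lambda>i. u @ [i]) ` {..<nb d (length u)} else {}))"
    using nbr_set[OF u] by simp
  also have "\<dots> = sum F (if u = [] then {} else {butlast u}) +
      sum F (if length u < h then (\<lambda>i. u @ [i]) ` {..<nb d (length u)} else {})"
  proof (rule sum.union_disjoint)
    show "(if u = [] then {} else {butlast u}) \<inter>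
      (if length u < h then (\<lambda>i. u @ [i]) ` {..<nb d (length u)} else {}) = {}"
    proof -
      have "butlast u \<noteq> u @ [i]" for i
      proof
        assume "butlast u = u @ [i]"
        then have "length (butlast u) = length (u @ [i])" by simp
        then show False by simp
      qed
      then show ?thesis by auto
    qed
  qed auto
  also have "sum F (if u = [] then {} else {butlast u}) = (if u = [] then 0 else F (butlast u))"
    by simp
  also have "sum F (if length u < h then (\<lambda>i. u @ [i]) ` {..<nb d (length u)} else {}) =
       (if length u < h then (\<Sum>i<nb d (length u). F (u @ [i])) else 0)"
  proof -
    have "inj_on (\<lambda>i. u @ [i]) {..<nb d (length u)}" by (rule inj_onI) simp
    then show ?thesis by (simp add: sum.reindex)
  qed
  finally show ?thesis .
qed


definition ev :: "nat list \<Rightarrow> nat list \<Rightarrow> int" where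
  "ev w = (\<lambda>j. if j = w then 1 else 0)"

definition rowv :: "nat \<Rightarrow> nat \<Rightarrow> nat list \<Rightarrow> nat list \<Rightarrow> int" where
  "rowv d h u = (\<lambda>j. if j \<in> tree_verts d h then tree_Delta d u j else 0)"

lemma lat_add: "f \<in> sandpile_lattice d h \<Longrightarrow> g \<in> sandpile_lattice d h \<Longrightarrow>
   (\<lambda>j. f j + g j) \<in> sandpile_lattice d h"
proof -
  assume "f \<in> sandpile_lattice d h" "g \<in> sandpile_lattice d h"
  then obtain a b where a: "\<forall>j. f j = (if j \<in> tree_verts d h then (\<Sum>i\<in>tree_verts d h. a i * tree_Delta d i j) else 0)"
    and b: "\<forall>j. g j = (if j \<in> tree_verts d h then (\<Sum>i\<in>tree_verts d h. b i * tree_Delta d i j) else 0)"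
    unfolding sandpile_lattice_def by blast
  have "\<forall>j. f j + g j = (if j \<in> tree_verts d h then (\<Sum>i\<in>tree_verts d h. (a i + b i) * tree_Delta d i j) else 0)"
    using a b by (simp add: distrib_right sum.distrib)
  then have "\<exists>a'. \<forall>j. f j + g j = (if j \<in> tree_verts d h then (\<Sum>i\<in>tree_verts d h. a' i * tree_Delta d i j) else 0)"
    by (rule exI[of _ "\<lambda>i. a i + b i"])
  then show ?thesis unfolding sandpile_lattice_def by simp
qed

lemma lat_smult: "f \<in> sandpile_lattice d h \<Longrightarrow> (\<lambda>j. c * f j) \<in> sandpile_lattice d h"
proof -
  assume "f \<in> sandpile_lattice d h"
  then obtain a where a: "\<forall>j. f j = (if j \<in> tree_verts d h then (\<Sum>i\<in>tree_verts d h. a i * tree_Delta d i j) else 0)"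
    unfolding sandpile_lattice_def by blast
  have "\<forall>j. c * f j = (if j \<in> tree_verts d h then (\<Sum>i\<in>tree_verts d h. (c * a i) * tree_Delta d i j) else 0)"
    using a by (simp add: sum_distrib_left mult.assoc)
  then have "\<exists>a'. \<forall>j. c * f j = (if j \<in> tree_verts d h then (\<Sum>i\<in>tree_verts d h. a' i * tree_Delta d i j) else 0)"
    by (rule exI[of _ "\<lambda>i. c * a i"])
  then show ?thesis unfolding sandpile_lattice_def by simp
qed

lemma lat_zero: "(\<lambda>j. 0) \<in> sandpile_lattice d h"
proof -
  have "\<exists>a'. \<forall>j. (0::int) = (if j \<in> tree_verts d h then (\<Sum>i\<in>tree_verts d h. a' i * tree_Delta d i j) else 0)"
    by (rule exI[of _ "\<lambda>i. 0"]) simp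
  then show ?thesis unfolding sandpile_lattice_def by simp
qed

lemma lat_row: assumes "u \<in> tree_verts d h" shows "rowv d h u \<in> sandpile_lattice d h"
proof -
  have e: "(if i = u then 1 else 0) * x = (if i = u then x else 0)" for i and x :: int by simp
  have "\<forall>j. rowv d h u j = (if j \<in> tree_verts d h then (\<Sum>i\<in>tree_verts d h. (if i = u then 1 else 0) * tree_Delta d i j) else 0)"
    using assms tv_finite[of d h] by (simp only: e sum.delta) (simp add: rowv_def)
  then have "\<exists>a'. \<forall>j. rowv d h u j = (if j \<in> tree_verts d h then (\<Sum>i\<in>tree_verts d h. a' i * tree_Delta d i j) else 0)"
    by (rule exI[of _ "\<lambda>i. if i = u then 1 else 0"])
  then show ?thesis unfolding sandpile_lattice_def by simp
qed

lemma lat_orth: assumes f: "f \<in> sandpile_lattice d h"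
  and F: "\<forall>u\<in>tree_verts d h. (\<Sum>j\<in>tree_verts d h. tree_Delta d u j * F j) = int d * F u"
  shows "int d dvd (\<Sum>j\<in>tree_verts d h. f j * F j)"
proof -
  obtain a where a: "\<forall>j. f j = (if j \<in> tree_verts d h then (\<Sum>i\<in>tree_verts d h. a i * tree_Delta d i j) else 0)"
    using f unfolding sandpile_lattice_def by blast
  have "(\<Sum>j\<in>tree_verts d h. f j * F j) = (\<Sum>j\<in>tree_verts d h. \<Sum>i\<in>tree_verts d h. a i * (tree_Delta d i j * F j))"
    using a by (simp add: sum_distrib_right mult.assoc)
  also have "\<dots> = (\<Sum>i\<in>tree_verts d h. a i * (\<Sum>j\<in>tree_verts d h. tree_Delta d i j * F j))"
    by (subst sum.swap) (simp add: sum_distrib_left)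
  also have "\<dots> = (\<Sum>i\<in>tree_verts d h. a i * (int d * F i))"
    using F by simp
  also have "\<dots> = int d * (\<Sum>i\<in>tree_verts d h. a i * F i)"
    by (simp add: sum_distrib_left algebra_simps)
  finally show ?thesis by simp
qed

lemma row_eq: assumes u: "u \<in> tree_verts d h"
  shows "rowv d h u j = int d * ev u j - (if u = [] then 0 else ev (butlast u) j)
     - (if length u < h then (\<Sum>i<nb d (length u). ev (u @ [i]) j) else 0)"
proof (cases "j \<in> tree_verts d h")
  case True
  have "rowv d h u j = (\<Sum>j'\<in>tree_verts d h. tree_Delta d u j' * (if j' = j then 1 else 0))"
  proof -
    have e: "x * (if j' = j then 1 else 0) = (if j' = j then x else 0)" for j' and x :: int by simp
    show ?thesis using True tv_finite[of d h] by (simp only: e sum.delta') (simp add: rowv_def)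
  qed
  also have "\<dots> = int d * ev u j - ((if u = [] then 0 else ev (butlast u) j) +
      (if length u < h then (\<Sum>i<nb d (length u). ev (u @ [i]) j) else 0))"
    by (subst delta_sum[OF u]) (simp add: ev_def eq_commute)
  finally show ?thesis by simp
next
  case False
  have "u \<noteq> j" using False u by auto
  moreover have "u \<noteq> [] \<Longrightarrow> butlast u \<noteq> j" using False tv_butlast[OF u] by auto
  moreover have "length u < h \<Longrightarrow> i < nb d (length u) \<Longrightarrow> u @ [i] \<noteq> j" for i
    using False u by (auto simp: tv_snoc)
  ultimately have "ev u j = 0" "u \<noteq> [] \<Longrightarrow> ev (butlast u) j = 0"
    "length u < h \<Longrightarrow> (\<Sum>i<nb d (length u). ev (u @ [i]) j) = 0"
    by (auto simp: ev_def intro!: sum.neutral) blast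
  then show ?thesis using False by (simp add: rowv_def)
qed

definition Gen :: "nat \<Rightarrow> nat \<Rightarrow> nat list set" where
  "Gen d h = {v \<in> tree_verts d h. even (h - length v) \<and> (v = [] \<or> last v + 1 < nb d (length v - 1))}"

function kv :: "nat \<Rightarrow> nat \<Rightarrow> nat list \<Rightarrow> nat list \<Rightarrow> int" where
  "kv d h v w = (if odd (h - length w) then 0
     else if w = [] \<or> last w + 1 < nb d (length w - 1) then (if w = v then 1 else 0)
     else - kv d h v (butlast (butlast w)) - (if v \<noteq> [] \<and> butlast v = butlast w then 1 else 0))"
  by pat_completeness auto
termination by (relation "measure (\<lambda>(d,h,v,w). length w)") auto

declare kv.simps[simp del]

lemma kv_pivot: "w \<in> Gen d h \<Longrightarrow> kv d h v w = (if w = v then 1 else 0)"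
  by (subst kv.simps) (auto simp: Gen_def)

lemma sib_sum: assumes v: "v \<in> Gen d h" and m: "m = nb d (length u)"
  shows "(\<Sum>i<m - 1. (if u @ [i] = v then 1 else 0)) = (if v \<noteq> [] \<and> butlast v = u then (1::int) else 0)"
proof (cases "\<exists>x. v = u @ [x]")
  case True
  then obtain x where x: "v = u @ [x]" by blast
  with v m have "x < m - 1" by (auto simp: Gen_def)
  have "(\<Sum>i<m - 1. (if u @ [i] = v then 1 else 0)) = (\<Sum>i<m - 1. (if i = x then (1::int) else 0))"
    using x by (intro sum.cong) auto
  also have "\<dots> = 1" using \<open>x < m - 1\<close> by simp
  finally show ?thesis using x by simp
next
  case False
  then have "v \<noteq> [] \<and> butlast v = u \<Longrightarrow> False"
    by (metis append_butlast_last_id)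
  moreover have "(\<Sum>i<m - 1. (if u @ [i] = v then 1 else 0)) = (0::int)"
    using False by (intro sum.neutral) auto
  ultimately show ?thesis by auto
qed

lemma kv_kernel: assumes d3: "d \<ge> 3" and u: "u \<in> tree_verts d h" and v: "v \<in> Gen d h"
  shows "(\<Sum>j\<in>tree_verts d h. tree_Delta d u j * kv d h v j) = int d * kv d h v u"
proof -
  let ?P = "(if u = [] then 0 else kv d h v (butlast u))"
  let ?C = "(if length u < h then (\<Sum>i<nb d (length u). kv d h v (u @ [i])) else 0)"
  have lu: "length u \<le> h" using u by (simp add: tv_alt)
  have "?P + ?C = 0"
  proof (cases "even (h - length u)")
    case True
    have "?P = 0"
    proof (cases "u = []")
      case False
      then have "odd (h - length (butlast u))" using True lu by (cases "length u") auto
      then show ?thesis using False by (subst kv.simps) simp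
    qed simp
    moreover have "?C = 0"
    proof (cases "length u < h")
      case True
      have "odd (h - length (u @ [i]))" for i using \<open>even (h - length u)\<close> True
        by (simp add: Suc_diff_Suc[symmetric])
      then have "kv d h v (u @ [i]) = 0" for i by (subst kv.simps) simp
      then show ?thesis by simp
    qed simp
    ultimately show ?thesis by simp
  next
    case False
    then have lt: "length u < h" by (metis diff_is_0_eq even_zero not_le)
    define m where "m = nb d (length u)"
    have m2: "m \<ge> 2" using d3 by (simp add: m_def nb_def) linarith
    have ev1: "even (h - length (u @ [i]))" for i using False lt
      by simp
    have pk: "kv d h v (butlast u) = ?P"
    proof (cases "u = []")
      case True
      then show ?thesis using False by (subst kv.simps) simp
    qed simp
    have a: "kv d h v (u @ [i]) = (if u @ [i] = v then 1 else 0)" if "i < m - 1" for i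
    proof -
      have c1: "\<not> odd (h - length (u @ [i]))" using ev1[of i] by simp
      have c2: "last (u @ [i]) + 1 < nb d (length (u @ [i]) - 1)" using that by (simp add: m_def)
      show ?thesis by (subst kv.simps) (simp only: c1 c2 if_True if_False simp_thms)
    qed
    have b: "kv d h v (u @ [m - 1]) = - kv d h v (butlast u) - (if v \<noteq> [] \<and> butlast v = u then 1 else 0)"
    proof -
      have c1: "\<not> odd (h - length (u @ [m - 1]))" using ev1[of "m - 1"] by simp
      have c2: "\<not> (u @ [m - 1] = [] \<or> last (u @ [m - 1]) + 1 < nb d (length (u @ [m - 1]) - 1))"
        using m2 by (simp add: m_def)
      show ?thesis by (subst kv.simps) (simp only: c1 c2 if_True if_False simp_thms butlast_snoc)
    qed
    have "(\<Sum>i<m. kv d h v (u @ [i])) = (\<Sum>i<m - 1. kv d h v (u @ [i])) + kv d h v (u @ [m - 1])"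
    proof -
      have "m = Suc (m - 1)" using m2 by simp
      then show ?thesis by (metis sum.lessThan_Suc diff_Suc_1)
    qed
    also have "(\<Sum>i<m - 1. kv d h v (u @ [i])) = (\<Sum>i<m - 1. (if u @ [i] = v then 1 else 0))"
      using a by (intro sum.cong) auto
    also have "\<dots> = (if v \<noteq> [] \<and> butlast v = u then 1 else 0)"
      by (rule sib_sum[OF v m_def])
    finally have "?C = - kv d h v (butlast u)" using lt b by (simp add: m_def)
    then show ?thesis using pk by simp
  qed
  then show ?thesis using delta_sum[OF u, of "kv d h v"] by simp
qed

lemma card_bounded_lists:
  "card {xs. length xs = n \<and> (\<forall>k<n. xs ! k < b k)} = (\<Prod>k<n. b k)"
proof (induction n arbitrary: b)
  case 0
  then show ?case by simp
next
  case (Suc n)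
  let ?S = "{ys. length ys = n \<and> (\<forall>k<n. ys ! k < b (Suc k))}"
  have eq: "{xs. length xs = Suc n \<and> (\<forall>k<Suc n. xs ! k < b k)} = (\<lambda>(i, ys). i # ys) ` ({..<b 0} \<times> ?S)"
  proof (intro set_eqI iffI)
    fix xs assume "xs \<in> {xs. length xs = Suc n \<and> (\<forall>k<Suc n. xs ! k < b k)}"
    then have l: "length xs = Suc n" and a: "\<forall>k<Suc n. xs ! k < b k" by auto
    then obtain i ys where xs: "xs = i # ys" by (cases xs) auto
    have "i < b 0" using a xs by auto
    moreover have "ys \<in> ?S" using a l xs by auto
    ultimately show "xs \<in> (\<lambda>(i, ys). i # ys) ` ({..<b 0} \<times> ?S)" using xs by auto
  next
    fix xs assume "xs \<in> (\<lambda>(i, ys). i # ys) ` ({..<b 0} \<times> ?S)"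
    then obtain i ys where xs: "xs = i # ys" and i: "i < b 0" and ys: "ys \<in> ?S" by auto
    have "\<forall>k<Suc n. xs ! k < b k"
    proof (intro allI impI)
      fix k assume "k < Suc n"
      then show "xs ! k < b k" using xs i ys by (cases k) auto
    qed
    then show "xs \<in> {xs. length xs = Suc n \<and> (\<forall>k<Suc n. xs ! k < b k)}" using xs ys by auto
  qed
  have "inj_on (\<lambda>(i, ys). i # ys) ({..<b 0} \<times> ?S)" by (rule inj_onI) auto
  then have "card {xs. length xs = Suc n \<and> (\<forall>k<Suc n. xs ! k < b k)} = card ({..<b 0} \<times> ?S)"
    unfolding eq by (rule card_image)
  also have "\<dots> = b 0 * card ?S" by (simp add: card_cartesian_product)
  also have "card ?S = (\<Prod>k<n. b (Suc k))" by (rule Suc.IH)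
  also have "b 0 * (\<Prod>k<n. b (Suc k)) = (\<Prod>k<Suc n. b k)" by (rule prod.lessThan_Suc_shift[symmetric])
  finally show ?case .
qed

definition Top :: "nat \<Rightarrow> nat \<Rightarrow> nat list set" where
  "Top d m = {xs. length xs = m \<and> (\<forall>k<m. xs ! k < (if k = m - 1 then nb d k - 1 else nb d k))}"

lemma card_Top: "card (Top d m) = (\<Prod>k<m. (if k = m - 1 then nb d k - 1 else nb d k))"
  unfolding Top_def by (rule card_bounded_lists)

lemma Top_char: assumes "m \<ge> 1" and mh: "m \<le> h"
  shows "Top d m = {v \<in> tree_verts d h. length v = m \<and> (v = [] \<or> last v + 1 < nb d (length v - 1))}"
proof (intro set_eqI iffI)
  fix xs assume "xs \<in> Top d m"
  then have l: "length xs = m" and a: "\<forall>k<m. xs ! k < (if k = m - 1 then nb d k - 1 else nb d k)"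
    by (auto simp: Top_def)
  have ne: "xs \<noteq> []" using l assms by auto
  have "\<forall>k<length xs. xs ! k < nb d k"
  proof (intro allI impI)
    fix k assume "k < length xs"
    then show "xs ! k < nb d k" using a l by (cases "k = m - 1") (auto dest!: spec[of _ k])
  qed
  moreover have "last xs + 1 < nb d (length xs - 1)"
    using a l ne assms by (auto simp: last_conv_nth dest!: spec[of _ "m - 1"])
  ultimately show "xs \<in> {v \<in> tree_verts d h. length v = m \<and> (v = [] \<or> last v + 1 < nb d (length v - 1))}"
    using l mh by (auto simp: tv_alt)
next
  fix xs assume "xs \<in> {v \<in> tree_verts d h. length v = m \<and> (v = [] \<or> last v + 1 < nb d (length v - 1))}"
  then have l: "length xs = m" and a: "\<forall>k<m. xs ! k < nb d k" and
    b: "xs = [] \<or> last xs + 1 < nb d (length xs - 1)" by (auto simp: tv_alt)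
  have ne: "xs \<noteq> []" using l assms by auto
  have "\<forall>k<m. xs ! k < (if k = m - 1 then nb d k - 1 else nb d k)"
  proof (intro allI impI)
    fix k assume k: "k < m"
    show "xs ! k < (if k = m - 1 then nb d k - 1 else nb d k)"
    proof (cases "k = m - 1")
      case True
      then show ?thesis using b ne l by (simp add: last_conv_nth)
    next
      case False
      then show ?thesis using a k by simp
    qed
  qed
  then show "xs \<in> Top d m" using l by (simp add: Top_def)
qed

lemma Gen_0: "Gen d 0 = {[]}"
  by (auto simp: Gen_def tv_alt)

lemma Gen_1: "Gen d 1 = Top d 1"
proof -
  have "Gen d 1 = {v \<in> tree_verts d 1. length v = 1 \<and> (v = [] \<or> last v + 1 < nb d (length v - 1))}"
  proof -
    have e: "\<And>v::nat list. length v \<le> 1 \<Longrightarrow> (even (1 - length v)) = (length v = 1)"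
      by (case_tac "length v") auto
    have o: "n \<le> Suc 0 \<Longrightarrow> odd n \<Longrightarrow> n = Suc 0" for n :: nat by (cases n) auto
    show ?thesis unfolding Gen_def by (auto simp: tv_alt e intro: o)
  qed
  then show ?thesis using Top_char[of 1 1 d] by simp
qed

lemma Gen_SS: "Gen d (Suc (Suc m)) = Top d (Suc (Suc m)) \<union> Gen d m"
proof -
  have "Gen d (Suc (Suc m)) = {v \<in> tree_verts d (Suc (Suc m)). length v = Suc (Suc m) \<and> (v = [] \<or> last v + 1 < nb d (length v - 1))}
     \<union> Gen d m"
  proof (intro set_eqI iffI)
    fix v assume v: "v \<in> Gen d (Suc (Suc m))"
    then have lv: "length v \<le> Suc (Suc m)" by (simp add: Gen_def tv_alt)
    show "v \<in> {v \<in> tree_verts d (Suc (Suc m)). length v = Suc (Suc m) \<and> (v = [] \<or> last v + 1 < nb d (length v - 1))} \<union> Gen d m"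
    proof (cases "length v = Suc (Suc m)")
      case True
      then show ?thesis using v by (simp add: Gen_def)
    next
      case False
      then have "length v \<noteq> Suc m" using v by (auto simp: Gen_def)
      with False lv have "length v \<le> m" by simp
      then show ?thesis using v by (auto simp: Gen_def tv_alt Suc_diff_le)
    qed
  next
    fix v assume "v \<in> {v \<in> tree_verts d (Suc (Suc m)). length v = Suc (Suc m) \<and> (v = [] \<or> last v + 1 < nb d (length v - 1))} \<union> Gen d m"
    then show "v \<in> Gen d (Suc (Suc m))"
      by (auto simp: Gen_def tv_alt Suc_diff_le)
  qed
  then show ?thesis using Top_char[of "Suc (Suc m)" "Suc (Suc m)" d] by simp
qed

lemma card_Gen1: "card (Gen d (Suc 0)) = d - 1"
  using Gen_1[of d] card_Top[of d 1] by (simp add: nb_def)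

lemma Top_Gen_disj: "Top d (Suc (Suc m)) \<inter> Gen d m = {}"
  by (auto simp: Top_def Gen_def tv_alt)

lemma finite_Gen: "finite (Gen d h)"
  using tv_finite[of d h] by (simp add: Gen_def)

lemma finite_Top: "finite (Top d (Suc (Suc m)))"
  using finite_Gen[of d "Suc (Suc m)"] Gen_SS[of d m] by simp

lemma card_Gen: assumes "d \<ge> 2" shows "card (Gen d h) = (d - 1) ^ h"
proof (induction h rule: nat_less_induct)
  case (1 h)
  show ?case
  proof (cases h)
    case 0
    then show ?thesis by (simp add: Gen_0)
  next
    case (Suc h')
    show ?thesis
    proof (cases h')
      case 0
      then show ?thesis using Suc by (simp add: card_Gen1)
    next
      case (Suc m)
      have IH: "card (Gen d m) = (d - 1) ^ m" using 1 \<open>h = Suc h'\<close> Suc by simp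
      have "card (Gen d h) = card (Top d (Suc (Suc m))) + card (Gen d m)"
        using \<open>h = Suc h'\<close> Suc Gen_SS[of d m] Top_Gen_disj[of d m] finite_Top[of d m] finite_Gen[of d m]
        by (simp add: card_Un_disjoint)
      also have "card (Top d (Suc (Suc m))) = d * (d - 1) ^ m * (d - 2)"
      proof -
        have "(\<Prod>k<Suc (Suc m). (if k = Suc (Suc m) - 1 then nb d k - 1 else nb d k))
           = (\<Prod>k<Suc m. nb d k) * (nb d (Suc m) - 1)"
          by (simp add: prod.lessThan_Suc)
        also have "(\<Prod>k<Suc m. nb d k) = d * (d - 1) ^ m"
          by (simp only: prod.lessThan_Suc_shift) (simp add: nb_def)
        also have "nb d (Suc m) - 1 = d - 2" by (simp add: nb_def)
        finally show ?thesis using card_Top[of d "Suc (Suc m)"] by simp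
      qed
      finally have cg: "card (Gen d h) = d * (d - 1) ^ m * (d - 2) + card (Gen d m)" .
      show ?thesis
      proof -
        obtain e where e: "d = Suc (Suc e)" using assms by (metis add_2_eq_Suc le_Suc_ex)
        have "d * (d - 1) ^ m * (d - 2) + (d - 1) ^ m = (d - 1) ^ m * (d - 1) ^ 2"
          unfolding e by (simp add: algebra_simps power2_eq_square)
        then show ?thesis using cg IH
          \<open>h = Suc h'\<close> Suc by (simp add: power_add[symmetric])
      qed
    qed
  qed
qed

definition spanR :: "nat \<Rightarrow> nat \<Rightarrow> nat \<Rightarrow> (nat \<Rightarrow> nat list \<Rightarrow> int) \<Rightarrow> (nat list \<Rightarrow> int) set" where
  "spanR d h k g = {y. \<exists>c :: nat \<Rightarrow> int. (\<lambda>j. y j - (\<Sum>i<k. c i * g i j)) \<in> sandpile_lattice d h}"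

lemma spanR_I: "(\<lambda>j. y j - (\<Sum>i<k. c i * g i j)) \<in> sandpile_lattice d h \<Longrightarrow> y \<in> spanR d h k g"
  unfolding spanR_def by blast

lemma R_add: assumes "y \<in> spanR d h k g" "z \<in> spanR d h k g"
  shows "(\<lambda>j. y j + z j) \<in> spanR d h k g"
proof -
  obtain c where c: "(\<lambda>j. y j - (\<Sum>i<k. c i * g i j)) \<in> sandpile_lattice d h"
    using assms(1) by (auto simp: spanR_def)
  obtain c' where c': "(\<lambda>j. z j - (\<Sum>i<k. c' i * g i j)) \<in> sandpile_lattice d h"
    using assms(2) by (auto simp: spanR_def)
  have "(\<lambda>j. (y j + z j) - (\<Sum>i<k. (c i + c' i) * g i j)) =
     (\<lambda>j. (y j - (\<Sum>i<k. c i * g i j)) + (z j - (\<Sum>i<k. c' i * g i j)))"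
    by (rule ext) (simp add: algebra_simps sum.distrib)
  then have "(\<lambda>j. (y j + z j) - (\<Sum>i<k. (c i + c' i) * g i j)) \<in> sandpile_lattice d h"
    using lat_add[OF c c'] by simp
  then show ?thesis by (rule spanR_I)
qed

lemma R_smult: assumes "y \<in> spanR d h k g"
  shows "(\<lambda>j. m * y j) \<in> spanR d h k g"
proof -
  obtain c where c: "(\<lambda>j. y j - (\<Sum>i<k. c i * g i j)) \<in> sandpile_lattice d h"
    using assms(1) by (auto simp: spanR_def)
  have "(\<lambda>j. m * y j - (\<Sum>i<k. (m * c i) * g i j)) = (\<lambda>j. m * (y j - (\<Sum>i<k. c i * g i j)))"
    by (rule ext) (simp add: algebra_simps sum_distrib_left)
  then have "(\<lambda>j. m * y j - (\<Sum>i<k. (m * c i) * g i j)) \<in> sandpile_lattice d h"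
    using lat_smult[OF c, of m] by simp
  then show ?thesis by (rule spanR_I)
qed

lemma R_lat: assumes "y \<in> sandpile_lattice d h" shows "y \<in> spanR d h k g"
proof -
  have "(\<lambda>j. y j - (\<Sum>i<k. 0 * g i j)) = y" by (rule ext) simp
  then have "(\<lambda>j. y j - (\<Sum>i<k. (\<lambda>_. 0) i * g i j)) \<in> sandpile_lattice d h" using assms by simp
  then show ?thesis by (rule spanR_I)
qed

lemma R_zero: "(\<lambda>j. 0) \<in> spanR d h k g"
  by (rule R_lat) (rule lat_zero)

lemma R_gen: assumes "i0 < k" shows "g i0 \<in> spanR d h k g"
proof -
  have "(\<lambda>j. g i0 j - (\<Sum>i<k. (if i = i0 then 1 else 0) * g i j)) = (\<lambda>j. 0)"
  proof (rule ext)
    fix j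
    have "(\<Sum>i<k. (if i = i0 then 1 else 0) * g i j) = (\<Sum>i<k. (if i = i0 then g i j else 0))"
      by (intro sum.cong) auto
    also have "\<dots> = g i0 j" using assms by simp
    finally show "g i0 j - (\<Sum>i<k. (if i = i0 then 1 else 0) * g i j) = 0" by simp
  qed
  then have "(\<lambda>j. g i0 j - (\<Sum>i<k. (\<lambda>i. if i = i0 then 1 else 0) i * g i j)) \<in> sandpile_lattice d h"
    using lat_zero by simp
  then show ?thesis by (rule spanR_I)
qed

lemma R_neg: "y \<in> spanR d h k g \<Longrightarrow> (\<lambda>j. - y j) \<in> spanR d h k g"
  using R_smult[of y d h k g "-1"] by simp

lemma R_comb: assumes "a \<in> spanR d h k g" "b \<in> spanR d h k g" "c \<in> spanR d h k g" "e \<in> spanR d h k g"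
  shows "(\<lambda>j. m * a j - b j - c j - e j) \<in> spanR d h k g"
proof -
  have "(\<lambda>j. ((m * a j + - b j) + - c j) + - e j) \<in> spanR d h k g"
    by (intro R_add R_neg R_smult assms)
  then show ?thesis by simp
qed

lemma R_sum: assumes "finite S" "\<forall>s\<in>S. F s \<in> spanR d h k g"
  shows "(\<lambda>j. \<Sum>s\<in>S. F s j) \<in> spanR d h k g"
  using assms
proof (induction S rule: finite_induct)
  case empty
  then show ?case using R_zero by simp
next
  case (insert x F')
  then have "(\<lambda>j. F x j + (\<Sum>s\<in>F'. F s j)) \<in> spanR d h k g"
    by (intro R_add) auto
  then show ?case using insert by simp
qed

lemma R_odd: assumes d3: "d \<ge> 3" and G: "\<forall>v\<in>Gen d h. ev v \<in> spanR d h k g"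
  shows "p \<in> tree_verts d h \<Longrightarrow> odd (h - length p) \<Longrightarrow> ev p \<in> spanR d h k g"
proof (induction "h - length p" arbitrary: p rule: less_induct)
  case less
  have lp: "length p < h" using less.prems by (metis diff_is_0_eq even_zero not_le)
  define v where "v = p @ [0]"
  have nb0: "0 < nb d (length p)" and nb1: "1 < nb d (length p)" using d3 by (auto simp: nb_def)
  have vV: "v \<in> tree_verts d h" using less.prems lp nb0 by (simp add: v_def tv_snoc)
  have vG: "v \<in> Gen d h" using vV less.prems lp nb1 by (simp add: Gen_def v_def)
  define C where "C = (\<lambda>j. if length v < h then (\<Sum>i<nb d (length v). ev (v @ [i]) j) else 0)"
  have CR: "C \<in> spanR d h k g"
  proof (cases "length v < h")
    case True
    have "\<forall>i\<in>{..<nb d (length v)}. ev (v @ [i]) \<in> spanR d h k g"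
    proof
      fix i assume i: "i \<in> {..<nb d (length v)}"
      show "ev (v @ [i]) \<in> spanR d h k g"
      proof (rule less.hyps)
        show "h - length (v @ [i]) < h - length p" using lp by (simp add: v_def)
        show "v @ [i] \<in> tree_verts d h" using vV True i by (simp add: tv_snoc)
        show "odd (h - length (v @ [i]))" using less.prems True by (simp add: v_def)
      qed
    qed
    then have "(\<lambda>j. \<Sum>i\<in>{..<nb d (length v)}. ev (v @ [i]) j) \<in> spanR d h k g"
      by (intro R_sum) auto
    then show ?thesis using True by (simp add: C_def)
  next
    case False
    then show ?thesis using R_zero by (simp add: C_def)
  qed
  have "ev p = (\<lambda>j. int d * ev v j - C j - rowv d h v j - 0)"
  proof (rule ext)
    fix j
    show "ev p j = int d * ev v j - C j - rowv d h v j - 0"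
      using row_eq[OF vV, of j] by (simp add: C_def v_def)
  qed
  also have "\<dots> \<in> spanR d h k g"
    by (intro R_comb G[rule_format] vG CR R_lat lat_row vV R_zero)
  finally show ?case .
qed

lemma R_even: assumes d3: "d \<ge> 3" and G: "\<forall>v\<in>Gen d h. ev v \<in> spanR d h k g"
  shows "v \<in> tree_verts d h \<Longrightarrow> even (h - length v) \<Longrightarrow> ev v \<in> spanR d h k g"
proof (induction "length v" arbitrary: v rule: less_induct)
  case less
  show ?case
  proof (cases "v \<in> Gen d h")
    case True
    then show ?thesis using G by blast
  next
    case False
    then have vne: "v \<noteq> []" and nl: "\<not> last v + 1 < nb d (length v - 1)"
      using less.prems by (auto simp: Gen_def)
    define u where "u = butlast v"
    have vu: "v = u @ [last v]" using vne by (simp add: u_def)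
    have uV: "u \<in> tree_verts d h" and lu: "length u < h" and lv: "last v < nb d (length u)"
      using less.prems(1) vu by (metis tv_snoc)+
    have lastv: "last v = nb d (length u) - 1" using nl lv vu
      by (metis Suc_eq_plus1 add_diff_cancel_right' butlast_snoc length_butlast less_Suc_eq not_less_eq u_def)
    have uodd: "odd (h - length u)" using less.prems(2) lu vu
      by (metis Suc_diff_Suc add.commute even_Suc length_append_singleton plus_1_eq_Suc)
    have uR: "ev u \<in> spanR d h k g" by (rule R_odd[OF d3 G uV uodd])
    define P where "P = (\<lambda>j. if u = [] then 0 else ev (butlast u) j)"
    have PR: "P \<in> spanR d h k g"
    proof (cases "u = []")
      case True
      then show ?thesis using R_zero by (simp add: P_def)
    next
      case False
      have "ev (butlast u) \<in> spanR d h k g"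
      proof (rule less.hyps)
        show "length (butlast u) < length v" using arg_cong[OF vu, of length] by simp
        show "butlast u \<in> tree_verts d h" using uV by (rule tv_butlast)
        show "even (h - length (butlast u))" using uodd lu False
          by (metis Suc_diff_Suc Suc_pred diff_Suc_1 even_Suc length_butlast length_greater_0_conv less_imp_diff_less)
      qed
      then show ?thesis using False by (simp add: P_def)
    qed
    define S where "S = (\<lambda>j. \<Sum>i<nb d (length u) - 1. ev (u @ [i]) j)"
    have SR: "S \<in> spanR d h k g"
      unfolding S_def
    proof (intro R_sum ballI)
      fix i assume i: "i \<in> {..<nb d (length u) - 1}"
      have "u @ [i] \<in> Gen d h"
      proof -
        have "i + 1 < nb d (length u)" using i by auto
        moreover have "even (h - length (u @ [i]))" using less.prems(2) vu by (metis length_append_singleton)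
        ultimately show ?thesis using uV lu by (simp add: Gen_def tv_snoc)
      qed
      then show "ev (u @ [i]) \<in> spanR d h k g" using G by blast
    qed simp
    have nbpos: "nb d (length u) = Suc (nb d (length u) - 1)" using lv by simp
    have "ev v = (\<lambda>j. int d * ev u j - P j - S j - rowv d h u j)"
    proof (rule ext)
      fix j
      have "(\<Sum>i<nb d (length u). ev (u @ [i]) j) = S j + ev v j"
      proof -
        define m' where "m' = nb d (length u) - 1"
        have nbm: "nb d (length u) = Suc m'" using nbpos by (simp add: m'_def)
        have vv: "u @ [m'] = v" using vu lastv by (simp add: m'_def)
        have "(\<Sum>i<Suc m'. ev (u @ [i]) j) = (\<Sum>i<m'. ev (u @ [i]) j) + ev (u @ [m']) j"
          by (rule sum.lessThan_Suc)
        then show ?thesis unfolding S_def using nbm vv by (simp add: m'_def[symmetric])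
      qed
      then show "ev v j = int d * ev u j - P j - S j - rowv d h u j"
        using row_eq[OF uV, of j] lu by (simp add: P_def)
    qed
    also have "\<dots> \<in> spanR d h k g"
      by (intro R_comb uR PR SR R_lat lat_row uV)
    finally show ?thesis .
  qed
qed

lemma R_all: assumes d3: "d \<ge> 3" and G: "\<forall>v\<in>Gen d h. ev v \<in> spanR d h k g"
  and x: "x \<in> ZV d h"
  shows "x \<in> spanR d h k g"
proof -
  have evR: "ev v \<in> spanR d h k g" if "v \<in> tree_verts d h" for v
    using R_odd[OF d3 G that] R_even[OF d3 G that] by blast
  have "x = (\<lambda>j. \<Sum>v\<in>tree_verts d h. x v * ev v j)"
  proof (rule ext)
    fix j
    have "(\<Sum>v\<in>tree_verts d h. x v * ev v j) = (\<Sum>v\<in>tree_verts d h. if v = j then x j else 0)"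
      by (intro sum.cong) (auto simp: ev_def)
    also have "\<dots> = x j" using x tv_finite[of d h] by (simp add: ZV_def)
    finally show "x j = (\<Sum>v\<in>tree_verts d h. x v * ev v j)" by simp
  qed
  also have "\<dots> \<in> spanR d h k g"
    by (intro R_sum ballI R_smult evR tv_finite)
  finally show ?thesis .
qed

definition Fm :: "nat \<Rightarrow> nat \<Rightarrow> (nat list \<Rightarrow> int) \<Rightarrow> nat list \<Rightarrow> int" where
  "Fm d h \<mu> j = (\<Sum>v\<in>Gen d h. \<mu> v * kv d h v j)"

lemma Fm_kernel: assumes d3: "d \<ge> 3"
  shows "\<forall>u\<in>tree_verts d h. (\<Sum>j\<in>tree_verts d h. tree_Delta d u j * Fm d h \<mu> j) = int d * Fm d h \<mu> u"
proof
  fix u assume u: "u \<in> tree_verts d h"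
  have "(\<Sum>j\<in>tree_verts d h. tree_Delta d u j * Fm d h \<mu> j)
      = (\<Sum>v\<in>Gen d h. \<mu> v * (\<Sum>j\<in>tree_verts d h. tree_Delta d u j * kv d h v j))"
    unfolding Fm_def by (simp add: sum_distrib_left sum_distrib_right algebra_simps) (rule sum.swap)
  also have "\<dots> = (\<Sum>v\<in>Gen d h. \<mu> v * (int d * kv d h v u))"
    using kv_kernel[OF d3 u] by simp
  also have "\<dots> = int d * Fm d h \<mu> u"
    unfolding Fm_def by (simp add: sum_distrib_left algebra_simps)
  finally show "(\<Sum>j\<in>tree_verts d h. tree_Delta d u j * Fm d h \<mu> j) = int d * Fm d h \<mu> u" .
qed

lemma Fm_diff: "Fm d h (\<lambda>v. \<mu> v - \<mu>' v) j = Fm d h \<mu> j - Fm d h \<mu>' j"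
  unfolding Fm_def by (simp add: left_diff_distrib sum_subtractf)

lemma Fm_pivot: "v0 \<in> Gen d h \<Longrightarrow> Fm d h \<mu> v0 = \<mu> v0"
proof -
  assume v0: "v0 \<in> Gen d h"
  have "Fm d h \<mu> v0 = (\<Sum>v\<in>Gen d h. if v = v0 then \<mu> v else 0)"
    unfolding Fm_def using v0 by (intro sum.cong) (auto simp: kv_pivot)
  also have "\<dots> = \<mu> v0" using v0 finite_Gen[of d h] by simp
  finally show ?thesis .
qed

lemma lower_bound: assumes d3: "d \<ge> 3"
  and gZ: "\<forall>i<k. g i \<in> ZV d h"
  and gen: "\<forall>x\<in>ZV d h. x \<in> spanR d h k g"
  shows "card (Gen d h) \<le> k"
proof (rule ccontr)
  assume "\<not> card (Gen d h) \<le> k"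
  then have kl: "k < card (Gen d h)" by simp
  let ?G = "Gen d h" and ?V = "tree_verts d h"
  define D where "D = PiE ?G (\<lambda>_. {0..<int d})"
  define C where "C = PiE {..<k} (\<lambda>_. {0..<int d})"
  define \<Phi> where "\<Phi> = (\<lambda>\<mu>. \<lambda>i\<in>{..<k}. (\<Sum>j\<in>?V. g i j * Fm d h \<mu> j) mod int d)"
  have dpos: "int d > 0" using d3 by simp
  have img: "\<Phi> ` D \<subseteq> C"
  proof
    fix y assume "y \<in> \<Phi> ` D"
    then obtain \<mu> where y: "y = \<Phi> \<mu>" by blast
    have "(\<lambda>i\<in>{..<k}. (\<Sum>j\<in>?V. g i j * Fm d h \<mu> j) mod int d) \<in> C"
      unfolding C_def by (rule restrict_PiE_iff[THEN iffD2]) (simp only: atLeastLessThan_iff, intro ballI conjI pos_mod_sign pos_mod_bound dpos)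
    then show "y \<in> C" by (simp add: y \<Phi>_def)
  qed
  have cD: "card D = d ^ card ?G" unfolding D_def using finite_Gen[of d h] by (simp add: card_PiE)
  have cC: "card C = d ^ k" unfolding C_def by (simp add: card_PiE)
  have "\<not> inj_on \<Phi> D"
  proof
    assume "inj_on \<Phi> D"
    then have "card D \<le> card C" using img unfolding C_def by (intro card_inj_on_le) (auto simp: C_def intro!: finite_PiE)
    moreover have "d ^ k < d ^ card ?G" using kl d3 by (intro power_strict_increasing) auto
    ultimately show False using cD cC by simp
  qed
  then obtain \<mu> \<mu>' where \<mu>: "\<mu> \<in> D" and \<mu>': "\<mu>' \<in> D" and ne: "\<mu> \<noteq> \<mu>'" and eq: "\<Phi> \<mu> = \<Phi> \<mu>'"
    unfolding inj_on_def by blast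
  obtain v0 where v0: "v0 \<in> ?G" and nv: "\<mu> v0 \<noteq> \<mu>' v0"
  proof -
    have "\<exists>v0\<in>?G. \<mu> v0 \<noteq> \<mu>' v0"
    proof (rule ccontr)
      assume "\<not> (\<exists>v0\<in>?G. \<mu> v0 \<noteq> \<mu>' v0)"
      then have "\<mu> = \<mu>'" using \<mu> \<mu>' unfolding D_def by (intro extensionalityI[of _ ?G]) (auto simp: PiE_iff)
      with ne show False by simp
    qed
    then show ?thesis using that by blast
  qed
  define \<nu> where "\<nu> = (\<lambda>v. \<mu> v - \<mu>' v)"
  have gdvd: "int d dvd (\<Sum>j\<in>?V. g i j * Fm d h \<nu> j)" if i: "i < k" for i
  proof -
    have "(\<Sum>j\<in>?V. g i j * Fm d h \<mu> j) mod int d = (\<Sum>j\<in>?V. g i j * Fm d h \<mu>' j) mod int d"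
      using fun_cong[OF eq, of i] i by (simp add: \<Phi>_def)
    then have "int d dvd (\<Sum>j\<in>?V. g i j * Fm d h \<mu> j) - (\<Sum>j\<in>?V. g i j * Fm d h \<mu>' j)"
      by (simp add: mod_eq_dvd_iff)
    also have "(\<Sum>j\<in>?V. g i j * Fm d h \<mu> j) - (\<Sum>j\<in>?V. g i j * Fm d h \<mu>' j) = (\<Sum>j\<in>?V. g i j * Fm d h \<nu> j)"
      unfolding \<nu>_def Fm_diff by (simp add: sum_subtractf right_diff_distrib)
    finally show ?thesis .
  qed
  have v0V: "v0 \<in> ?V" using v0 by (simp add: Gen_def)
  have xZ: "ev v0 \<in> ZV d h" using v0V by (auto simp: ZV_def ev_def)
  then obtain c where c: "(\<lambda>j. ev v0 j - (\<Sum>i<k. c i * g i j)) \<in> sandpile_lattice d h"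
    using gen by (auto simp: spanR_def)
  have "int d dvd (\<Sum>j\<in>?V. (ev v0 j - (\<Sum>i<k. c i * g i j)) * Fm d h \<nu> j)"
    using lat_orth[OF c Fm_kernel[OF d3]] by simp
  also have "(\<Sum>j\<in>?V. (ev v0 j - (\<Sum>i<k. c i * g i j)) * Fm d h \<nu> j)
     = (\<Sum>j\<in>?V. ev v0 j * Fm d h \<nu> j) - (\<Sum>i<k. c i * (\<Sum>j\<in>?V. g i j * Fm d h \<nu> j))"
    by (simp add: left_diff_distrib sum_subtractf sum_distrib_right sum_distrib_left algebra_simps)
      (rule sum.swap)
  finally have dv1: "int d dvd (\<Sum>j\<in>?V. ev v0 j * Fm d h \<nu> j) - (\<Sum>i<k. c i * (\<Sum>j\<in>?V. g i j * Fm d h \<nu> j))" .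
  have dv2: "int d dvd (\<Sum>i<k. c i * (\<Sum>j\<in>?V. g i j * Fm d h \<nu> j))"
    by (intro dvd_sum) (simp add: gdvd)
  have "int d dvd (\<Sum>j\<in>?V. ev v0 j * Fm d h \<nu> j)"
    using dvd_add[OF dv1 dv2] by simp
  moreover have "(\<Sum>j\<in>?V. ev v0 j * Fm d h \<nu> j) = \<nu> v0"
  proof -
    have "(\<Sum>j\<in>?V. ev v0 j * Fm d h \<nu> j) = (\<Sum>j\<in>?V. if j = v0 then Fm d h \<nu> j else 0)"
      by (intro sum.cong) (auto simp: ev_def)
    also have "\<dots> = Fm d h \<nu> v0" using v0V tv_finite[of d h] by simp
    also have "\<dots> = \<nu> v0" by (rule Fm_pivot[OF v0])
    finally show ?thesis .
  qed
  ultimately have "int d dvd \<nu> v0" by simp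
  moreover have "\<nu> v0 \<noteq> 0" using nv by (simp add: \<nu>_def)
  moreover have "\<bar>\<nu> v0\<bar> < int d"
  proof -
    have "0 \<le> \<mu> v0 \<and> \<mu> v0 < int d" "0 \<le> \<mu>' v0 \<and> \<mu>' v0 < int d"
      using \<mu> \<mu>' v0 unfolding D_def by (auto simp: PiE_iff)
    then show ?thesis unfolding \<nu>_def by (simp add: abs_less_iff)
  qed
  ultimately have "\<bar>int d\<bar> \<le> \<bar>\<nu> v0\<bar>" and "\<bar>\<nu> v0\<bar> < int d"
    using dvd_imp_le_int by blast+
  then show False by simp
qed

theorem theorem2p1:
  fixes d h :: nat
  assumes "d \<ge> 3" and "h \<ge> 1"
  shows "sandpile_rank d h = (d - 1) ^ h"
proof -
  have d3: "d \<ge> 3" by (rule assms(1))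
  define n where "n = (d - 1) ^ h"
  have cG: "card (Gen d h) = n" unfolding n_def using d3 by (intro card_Gen) simp
  obtain f where bij: "bij_betw f {0..<n} (Gen d h)"
    using ex_bij_betw_nat_finite[OF finite_Gen[of d h]] cG by auto
  define g where "g = (\<lambda>i. ev (f i))"
  have P: "\<exists>g :: nat \<Rightarrow> nat list \<Rightarrow> int. (\<forall>i<n. g i \<in> ZV d h) \<and>
     (\<forall>x \<in> ZV d h. \<exists>c :: nat \<Rightarrow> int.
        (\<lambda>j. x j - (\<Sum>i<n. c i * g i j)) \<in> sandpile_lattice d h)"
  proof (intro exI conjI)
    show "\<forall>i<n. g i \<in> ZV d h"
    proof (intro allI impI)
      fix i assume "i < n"
      then have "f i \<in> Gen d h" using bij by (auto simp: bij_betw_def)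
      then have "f i \<in> tree_verts d h" by (simp add: Gen_def)
      then show "g i \<in> ZV d h" by (auto simp: g_def ZV_def ev_def)
    qed
    have G: "\<forall>v\<in>Gen d h. ev v \<in> spanR d h n g"
    proof
      fix v assume "v \<in> Gen d h"
      then have "v \<in> f ` {0..<n}" using bij by (simp add: bij_betw_def)
      then obtain i where i: "i \<in> {0..<n}" and fi: "f i = v" by blast
      have "g i \<in> spanR d h n g" using i by (intro R_gen) simp
      then show "ev v \<in> spanR d h n g" using fi by (simp add: g_def)
    qed
    show "\<forall>x \<in> ZV d h. \<exists>c :: nat \<Rightarrow> int.
        (\<lambda>j. x j - (\<Sum>i<n. c i * g i j)) \<in> sandpile_lattice d h"
      using R_all[OF d3 G] by (simp add: spanR_def)
  qed
  have M: "n \<le> k" if ex: "\<exists>g :: nat \<Rightarrow> nat list \<Rightarrow> int. (\<forall>i<k. g i \<in> ZV d h) \<and>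
     (\<forall>x \<in> ZV d h. \<exists>c :: nat \<Rightarrow> int.
        (\<lambda>j. x j - (\<Sum>i<k. c i * g i j)) \<in> sandpile_lattice d h)" for k
  proof -
    obtain g' where g1: "\<forall>i<k. g' i \<in> ZV d h" and g2: "\<forall>x \<in> ZV d h. \<exists>c :: nat \<Rightarrow> int.
        (\<lambda>j. x j - (\<Sum>i<k. c i * g' i j)) \<in> sandpile_lattice d h"
      using ex by blast
    have "\<forall>x\<in>ZV d h. x \<in> spanR d h k g'" using g2 by (simp add: spanR_def)
    then have "card (Gen d h) \<le> k" by (rule lower_bound[OF d3 g1])
    then show ?thesis using cG by simp
  qed
  show ?thesis
    unfolding sandpile_rank_def n_def[symmetric]
    by (rule Least_equality) (use P M in auto)
qed

end
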